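(* Let $\rho\in(0,1)$. For any $z\in\mathbb C$ with $|z|\le\rho$, $$\big|1-\exp(\mathrm i\phi(1+z))+\mathrm i\,\Im(z)\big|\le\frac{2-\rho}{(1-\rho)^2}|z|^2.$$
   Context: For $u\in\mathbb C$, $\exp(\mathrm i\phi(u))=u/|u|$ if $u\neq0$ (and $1$ if $u=0$). *)

theory Defs
  imports "HOL-Analysis.Analysis"
begin

text \<open>exp(i phi(u)): the unit phase of u, with the convention 1 at u = 0.\<close>
definition phase_exp :: "complex \<Rightarrow> complex" where
  "phase_exp u = (if u = 0 then 1 else u / complex_of_real (cmod u))"

end

theory Submission
  imports Defs
begin

theorem lemma17:
  fixes \<rho> :: real and z :: complex
  assumes "0 < \<rho>" and "\<rho> < 1" and "cmod z \<le> \<rho>"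
  shows "cmod (1 - phase_exp (1 + z) + \<i> * complex_of_real (Im z))
           \<le> (2 - \<rho>) / (1 - \<rho>)\<^sup>2 * (cmod z)\<^sup>2"
proof -
  obtain x y where zxy: "z = Complex x y" by (metis complex.collapse)
  define s where "s = cmod z"
  define r where "r = cmod (1 + z)"
  define a where "a = 1 - \<rho>"
  have a0: "a > 0" using assms by (simp add: a_def)
  have sxy: "s^2 = x^2 + y^2" unfolding s_def zxy by (simp add: cmod_def)
  have s0: "s \<ge> 0" by (simp add: s_def)
  have ss: "s \<le> \<rho>" using assms s_def by simp
  have rdef: "r = sqrt ((1+x)^2 + y^2)" unfolding r_def zxy by (simp add: cmod_def)
  have r2: "r^2 = (1+x)^2 + y^2" using rdef by simp
  have ra: "r \<ge> a"
  proof -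
    have "cmod (1::complex) \<le> cmod (1+z) + cmod z" by (metis add_diff_cancel_right' norm_triangle_ineq4 add.commute norm_minus_commute)
    thus ?thesis unfolding r_def a_def using ss s_def by simp
  qed
  have rpos: "r > 0" using ra a0 by simp
  have xa: "\<bar>x\<bar> \<le> s" unfolding s_def zxy using abs_Re_le_cmod[of "Complex x y"] by simp
  have ya: "\<bar>y\<bar> \<le> s" unfolding s_def zxy using abs_Im_le_cmod[of "Complex x y"] by simp
  have x1: "1 + x \<ge> a" using xa ss a_def by linarith
  have rx: "r \<ge> 1 + x" using rdef by (metis abs_ge_self real_sqrt_abs real_sqrt_le_mono le_add_same_cancel1 zero_le_power2 dual_order.trans)
  have rm1: "\<bar>r - 1\<bar> \<le> s"
  proof -
    have "cmod (1+z) \<le> cmod (1::complex) + cmod z" by (rule norm_triangle_ineq)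
    moreover have "cmod (1::complex) \<le> cmod (1+z) + cmod z" by (metis add_diff_cancel_right' norm_triangle_ineq4 add.commute norm_minus_commute)
    ultimately show ?thesis unfolding r_def s_def by simp
  qed
  have key1: "r - (1 + x) = y^2 / (r + (1 + x))"
    using r2 x1 rx a0 by (simp add: field_simps power2_eq_square)
  have b1: "r - (1 + x) \<le> s^2 / (2*a)"
  proof -
    have "y^2 \<le> s^2" using sxy by simp
    moreover have "2*a \<le> r + (1+x)" using ra x1 by simp
    ultimately have "y^2 / (r + (1 + x)) \<le> s^2 / (2*a)"
      using a0 by (intro frac_le) auto
    thus ?thesis using key1 by simp
  qed
  have b2: "\<bar>y\<bar> * \<bar>r - 1\<bar> \<le> s^2"
    using mult_mono[OF ya rm1] s0 by (simp add: power2_eq_square)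
  have ph: "phase_exp (1 + z) = Complex ((1+x)/r) (y/r)"
  proof -
    have nz: "1 + z \<noteq> 0" using rpos r_def by auto
    have "phase_exp (1 + z) = (1 + z) / complex_of_real r"
      using nz unfolding phase_exp_def r_def by simp
    thus ?thesis using rpos unfolding zxy by (simp add: complex_eq_iff)
  qed
  have E: "1 - phase_exp (1 + z) + \<i> * complex_of_real (Im z)
      = Complex ((r - (1+x))/r) (y * (r - 1) / r)"
    using rpos unfolding ph by (simp add: complex_eq_iff zxy field_simps)
  have "cmod (Complex ((r - (1+x))/r) (y * (r - 1) / r))
      \<le> \<bar>(r - (1+x))/r\<bar> + \<bar>y * (r - 1) / r\<bar>"
    using cmod_le[of "Complex ((r - (1+x))/r) (y * (r - 1) / r)"] by simp
  also have "\<dots> = ((r - (1+x)) + \<bar>y\<bar> * \<bar>r - 1\<bar>) / r"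
    using rpos rx by (simp add: abs_mult add_divide_distrib)
  also have "\<dots> \<le> (s^2/(2*a) + s^2) / r"
    using b1 b2 rpos by (intro divide_right_mono) auto
  also have "\<dots> \<le> (s^2/(2*a) + s^2) / a"
    using ra a0 s0 by (intro divide_left_mono) auto
  also have "\<dots> \<le> (2 - \<rho>) / (1 - \<rho>)\<^sup>2 * s^2"
  proof -
    have "(s^2/(2*a) + s^2) / a = (1/2 + a) / a^2 * s^2"
      using a0 by (simp add: field_simps power2_eq_square)
    also have "\<dots> \<le> (1 + a) / a^2 * s^2"
      using a0 by (intro mult_right_mono divide_right_mono) auto
    finally show ?thesis unfolding a_def by simp
  qed
  finally show ?thesis using E s_def by simp
qed

end
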